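(* Let $\mathcal A$ be an abelian category. (1) The following are equivalent: (i) $\mathcal A$ is spectral; (ii) $\mathcal A$ has enough injectives and $N$ is $M$-$F$-split for all objects $M,N$ of $\mathcal A$ and every fully invariant subobject $F$ of $N$; (iii) $\mathcal A$ has enough injectives and every object $N$ is self-$F$-split for every fully invariant subobject $F$ of $N$; (iv) $\mathcal A$ has enough injectives and $N$ is $M$-$F$-split for all objects $M,N$ with $N$ injective and every fully invariant subobject $F$ of $N$; (v) $\mathcal A$ has enough injectives and every injective object $N$ is self-$F$-split for every fully invariant subobject $F$ of $N$. (2) The following are equivalent: (i) $\mathcal A$ is spectral; (ii) $\mathcal A$ has enough projectives and $N$ is dual $M$-$F$-split for all objects $M,N$ and every fully invariant subobject $F$ of $N$; (iii) $\mathcal A$ has enough projectives and every object $N$ is dual self-$F$-split for every fully invariant subobject $F$ of $N$; (iv) $\mathcal A$ has enough projectives and $N$ is dual $M$-$F$-split for all objects $M,N$ with $M$ projective and every fully invariant subobject $F$ of $N$; (v) $\mathcal A$ has enough projectives and every projective object $N$ is dual self-$F$-split for every fully invariant subobject $F$ of $N$.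
   Context: An abelian category is spectral if every short exact sequence in it splits. A morphism $s:X\to Y$ is a section if $ts=1_X$ for some $t$, a retraction if $st=1_Y$ for some $t$. A subobject $F$ of $N$ with inclusion $i:F\to N$ is fully invariant if for every morphism $h:N\to N$ there is $\alpha:F\to F$ with $hi=i\alpha$. For objects $M,N$ and a fully invariant subobject $F$ of $N$ with cokernel $d:N\to N/F$: $N$ is $M$-$F$-split if for every morphism $g:M\to N$, $\ker(dg)$ is a section; $N$ is dual $M$-$F$-split if for every morphism $g:N\to M$, $\mathrm{coker}(gi)$ is a retraction. Self-$F$-split means $N$-$F$-split (and similarly for the dual notion). *)

theory Defs
  imports Main
begin

record ('o,'m) cat =
  Ob   :: "'o set"
  Ar   :: "'m set"
  Dom  :: "'m \<Rightarrow> 'o"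
  Cod  :: "'m \<Rightarrow> 'o"
  Id   :: "'o \<Rightarrow> 'm"
  Comp :: "'m \<Rightarrow> 'm \<Rightarrow> 'm"   (* Comp C g f = g \<circ> f *)

definition hom :: "('o,'m) cat \<Rightarrow> 'o \<Rightarrow> 'o \<Rightarrow> 'm set" where
  "hom C X Y = {f \<in> Ar C. Dom C f = X \<and> Cod C f = Y}"

definition category :: "('o,'m) cat \<Rightarrow> bool" where
  "category C \<longleftrightarrow>
     (\<forall>f\<in>Ar C. Dom C f \<in> Ob C \<and> Cod C f \<in> Ob C) \<and>
     (\<forall>X\<in>Ob C. Id C X \<in> hom C X X) \<and>
     (\<forall>f\<in>Ar C. \<forall>g\<in>Ar C. Cod C f = Dom C g \<longrightarrow> Comp C g f \<in> hom C (Dom C f) (Cod C g)) \<and>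
     (\<forall>f\<in>Ar C. Comp C f (Id C (Dom C f)) = f \<and> Comp C (Id C (Cod C f)) f = f) \<and>
     (\<forall>f\<in>Ar C. \<forall>g\<in>Ar C. \<forall>h\<in>Ar C. Cod C f = Dom C g \<longrightarrow> Cod C g = Dom C h \<longrightarrow>
        Comp C h (Comp C g f) = Comp C (Comp C h g) f)"

definition mono :: "('o,'m) cat \<Rightarrow> 'm \<Rightarrow> bool" where
  "mono C f \<longleftrightarrow> f \<in> Ar C \<and>
     (\<forall>g\<in>Ar C. \<forall>h\<in>Ar C. Cod C g = Dom C f \<longrightarrow> Cod C h = Dom C f \<longrightarrow> Dom C g = Dom C h \<longrightarrow>
        Comp C f g = Comp C f h \<longrightarrow> g = h)"

definition epi :: "('o,'m) cat \<Rightarrow> 'm \<Rightarrow> bool" where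
  "epi C f \<longleftrightarrow> f \<in> Ar C \<and>
     (\<forall>g\<in>Ar C. \<forall>h\<in>Ar C. Dom C g = Cod C f \<longrightarrow> Dom C h = Cod C f \<longrightarrow> Cod C g = Cod C h \<longrightarrow>
        Comp C g f = Comp C h f \<longrightarrow> g = h)"

definition section_mor :: "('o,'m) cat \<Rightarrow> 'm \<Rightarrow> bool" where
  "section_mor C s \<longleftrightarrow> s \<in> Ar C \<and>
     (\<exists>t\<in>hom C (Cod C s) (Dom C s). Comp C t s = Id C (Dom C s))"

definition retraction_mor :: "('o,'m) cat \<Rightarrow> 'm \<Rightarrow> bool" where
  "retraction_mor C s \<longleftrightarrow> s \<in> Ar C \<and>
     (\<exists>t\<in>hom C (Cod C s) (Dom C s). Comp C s t = Id C (Cod C s))"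

definition zero_object :: "('o,'m) cat \<Rightarrow> 'o \<Rightarrow> bool" where
  "zero_object C Z \<longleftrightarrow> Z \<in> Ob C \<and>
     (\<forall>X\<in>Ob C. (\<exists>!f. f \<in> hom C X Z) \<and> (\<exists>!f. f \<in> hom C Z X))"

definition zero_mor :: "('o,'m) cat \<Rightarrow> 'm \<Rightarrow> bool" where
  "zero_mor C f \<longleftrightarrow> f \<in> Ar C \<and>
     (\<exists>Z. zero_object C Z \<and> (\<exists>a\<in>hom C (Dom C f) Z. \<exists>b\<in>hom C Z (Cod C f). f = Comp C b a))"

definition is_kernel :: "('o,'m) cat \<Rightarrow> 'm \<Rightarrow> 'm \<Rightarrow> bool" where
  "is_kernel C f k \<longleftrightarrow> f \<in> Ar C \<and> k \<in> Ar C \<and> Cod C k = Dom C f \<and> zero_mor C (Comp C f k) \<and>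
     (\<forall>k'\<in>Ar C. Cod C k' = Dom C f \<longrightarrow> zero_mor C (Comp C f k') \<longrightarrow>
        (\<exists>!u. u \<in> hom C (Dom C k') (Dom C k) \<and> Comp C k u = k'))"

definition is_cokernel :: "('o,'m) cat \<Rightarrow> 'm \<Rightarrow> 'm \<Rightarrow> bool" where
  "is_cokernel C f d \<longleftrightarrow> f \<in> Ar C \<and> d \<in> Ar C \<and> Dom C d = Cod C f \<and> zero_mor C (Comp C d f) \<and>
     (\<forall>d'\<in>Ar C. Dom C d' = Cod C f \<longrightarrow> zero_mor C (Comp C d' f) \<longrightarrow>
        (\<exists>!u. u \<in> hom C (Cod C d) (Cod C d') \<and> Comp C u d = d'))"

definition is_product :: "('o,'m) cat \<Rightarrow> 'o \<Rightarrow> 'o \<Rightarrow> 'o \<Rightarrow> 'm \<Rightarrow> 'm \<Rightarrow> bool" where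
  "is_product C A B P p1 p2 \<longleftrightarrow> p1 \<in> hom C P A \<and> p2 \<in> hom C P B \<and>
     (\<forall>X\<in>Ob C. \<forall>f\<in>hom C X A. \<forall>g\<in>hom C X B.
        \<exists>!u. u \<in> hom C X P \<and> Comp C p1 u = f \<and> Comp C p2 u = g)"

definition preadditive ::
  "('o,'m) cat \<Rightarrow> ('m \<Rightarrow> 'm \<Rightarrow> 'm) \<Rightarrow> ('o \<Rightarrow> 'o \<Rightarrow> 'm) \<Rightarrow> bool" where
  "preadditive C add zr \<longleftrightarrow> category C \<and>
     (\<forall>X\<in>Ob C. \<forall>Y\<in>Ob C. zr X Y \<in> hom C X Y \<and>
        (\<forall>f\<in>hom C X Y. \<forall>g\<in>hom C X Y. add f g \<in> hom C X Y \<and> add f g = add g f) \<and>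
        (\<forall>f\<in>hom C X Y. \<forall>g\<in>hom C X Y. \<forall>h\<in>hom C X Y. add (add f g) h = add f (add g h)) \<and>
        (\<forall>f\<in>hom C X Y. add f (zr X Y) = f \<and> (\<exists>g\<in>hom C X Y. add f g = zr X Y))) \<and>
     (\<forall>X\<in>Ob C. \<forall>Y\<in>Ob C. \<forall>Z\<in>Ob C. \<forall>f\<in>hom C X Y. \<forall>g\<in>hom C Y Z. \<forall>h\<in>hom C Y Z.
        Comp C (add g h) f = add (Comp C g f) (Comp C h f)) \<and>
     (\<forall>X\<in>Ob C. \<forall>Y\<in>Ob C. \<forall>Z\<in>Ob C. \<forall>f\<in>hom C X Y. \<forall>g\<in>hom C X Y. \<forall>h\<in>hom C Y Z.
        Comp C h (add f g) = add (Comp C h f) (Comp C h g))"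

definition abelian :: "('o,'m) cat \<Rightarrow> bool" where
  "abelian C \<longleftrightarrow> (\<exists>add zr. preadditive C add zr) \<and>
     (\<exists>Z. zero_object C Z) \<and>
     (\<forall>A\<in>Ob C. \<forall>B\<in>Ob C. \<exists>P p1 p2. is_product C A B P p1 p2) \<and>
     (\<forall>f\<in>Ar C. (\<exists>k. is_kernel C f k) \<and> (\<exists>d. is_cokernel C f d)) \<and>
     (\<forall>m. mono C m \<longrightarrow> (\<exists>f. is_kernel C f m)) \<and>
     (\<forall>e. epi C e \<longrightarrow> (\<exists>f. is_cokernel C f e))"

definition short_exact :: "('o,'m) cat \<Rightarrow> 'm \<Rightarrow> 'm \<Rightarrow> bool" where
  "short_exact C f g \<longleftrightarrow> mono C f \<and> epi C g \<and> Cod C f = Dom C g \<and> is_kernel C g f"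

definition spectral :: "('o,'m) cat \<Rightarrow> bool" where
  "spectral C \<longleftrightarrow> (\<forall>f g. short_exact C f g \<longrightarrow> section_mor C f)"

definition injective_obj :: "('o,'m) cat \<Rightarrow> 'o \<Rightarrow> bool" where
  "injective_obj C I \<longleftrightarrow> I \<in> Ob C \<and>
     (\<forall>m f. mono C m \<longrightarrow> f \<in> hom C (Dom C m) I \<longrightarrow> (\<exists>h\<in>hom C (Cod C m) I. Comp C h m = f))"

definition projective_obj :: "('o,'m) cat \<Rightarrow> 'o \<Rightarrow> bool" where
  "projective_obj C P \<longleftrightarrow> P \<in> Ob C \<and>
     (\<forall>e f. epi C e \<longrightarrow> f \<in> hom C P (Cod C e) \<longrightarrow> (\<exists>h\<in>hom C P (Dom C e). Comp C e h = f))"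

definition enough_injectives :: "('o,'m) cat \<Rightarrow> bool" where
  "enough_injectives C \<longleftrightarrow> (\<forall>X\<in>Ob C. \<exists>I m. injective_obj C I \<and> mono C m \<and> m \<in> hom C X I)"

definition enough_projectives :: "('o,'m) cat \<Rightarrow> bool" where
  "enough_projectives C \<longleftrightarrow> (\<forall>X\<in>Ob C. \<exists>P e. projective_obj C P \<and> epi C e \<and> e \<in> hom C P X)"

text \<open>A subobject F of N is represented by its inclusion, a mono i with codomain N.\<close>

definition fully_invariant :: "('o,'m) cat \<Rightarrow> 'o \<Rightarrow> 'm \<Rightarrow> bool" where
  "fully_invariant C N i \<longleftrightarrow> mono C i \<and> Cod C i = N \<and>
     (\<forall>h\<in>hom C N N. \<exists>\<alpha>\<in>hom C (Dom C i) (Dom C i). Comp C h i = Comp C i \<alpha>)"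

definition MF_split :: "('o,'m) cat \<Rightarrow> 'o \<Rightarrow> 'o \<Rightarrow> 'm \<Rightarrow> bool" where
  "MF_split C M N i \<longleftrightarrow>
     (\<forall>g\<in>hom C M N. \<forall>d. is_cokernel C i d \<longrightarrow>
        (\<forall>k. is_kernel C (Comp C d g) k \<longrightarrow> section_mor C k))"

definition dual_MF_split :: "('o,'m) cat \<Rightarrow> 'o \<Rightarrow> 'o \<Rightarrow> 'm \<Rightarrow> bool" where
  "dual_MF_split C M N i \<longleftrightarrow>
     (\<forall>g\<in>hom C N M. \<forall>c. is_cokernel C (Comp C g i) c \<longrightarrow> retraction_mor C c)"

end

theory Submission
  imports Defs
begin

locale abcat =
  fixes C :: "('o,'m) cat" and add :: "'m \<Rightarrow> 'm \<Rightarrow> 'm" and zr :: "'o \<Rightarrow> 'o \<Rightarrow> 'm"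
  assumes pre: "preadditive C add zr" and ab: "abelian C"
begin

lemma cat: "category C" using pre unfolding preadditive_def by blast

lemma Dom_Ob[simp]: "f \<in> Ar C \<Longrightarrow> Dom C f \<in> Ob C" using cat unfolding category_def by blast
lemma Cod_Ob[simp]: "f \<in> Ar C \<Longrightarrow> Cod C f \<in> Ob C" using cat unfolding category_def by blast

lemma comp_simps[simp]:
  assumes "f \<in> Ar C" "g \<in> Ar C" "Cod C f = Dom C g"
  shows "Comp C g f \<in> Ar C" "Dom C (Comp C g f) = Dom C f" "Cod C (Comp C g f) = Cod C g"
  using cat assms unfolding category_def hom_def by blast+

lemma Id_simps[simp]:
  assumes "X \<in> Ob C"
  shows "Id C X \<in> Ar C" "Dom C (Id C X) = X" "Cod C (Id C X) = X"
  using cat assms unfolding category_def hom_def by blast+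

lemma comp_Id[simp]: "f \<in> Ar C \<Longrightarrow> Dom C f = X \<Longrightarrow> Comp C f (Id C X) = f"
  using cat unfolding category_def by blast
lemma Id_comp[simp]: "f \<in> Ar C \<Longrightarrow> Cod C f = Y \<Longrightarrow> Comp C (Id C Y) f = f"
  using cat unfolding category_def by blast

lemma assoc:
  assumes "f \<in> Ar C" "g \<in> Ar C" "h \<in> Ar C" "Cod C f = Dom C g" "Cod C g = Dom C h"
  shows "Comp C (Comp C h g) f = Comp C h (Comp C g f)"
  using cat assms unfolding category_def by metis

lemma homI: "f \<in> Ar C \<Longrightarrow> Dom C f = X \<Longrightarrow> Cod C f = Y \<Longrightarrow> f \<in> hom C X Y"
  by (simp add: hom_def)
lemma homD: "f \<in> hom C X Y \<Longrightarrow> f \<in> Ar C \<and> Dom C f = X \<and> Cod C f = Y"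
  by (simp add: hom_def)

lemma zr_simps[simp]:
  assumes "X \<in> Ob C" "Y \<in> Ob C"
  shows "zr X Y \<in> Ar C" "Dom C (zr X Y) = X" "Cod C (zr X Y) = Y"
  using pre assms unfolding preadditive_def hom_def by blast+

lemma add_simps[simp]:
  assumes "f \<in> Ar C" "g \<in> Ar C" "Dom C g = Dom C f" "Cod C g = Cod C f"
  shows "add f g \<in> Ar C" "Dom C (add f g) = Dom C f" "Cod C (add f g) = Cod C f"
proof -
  have "f \<in> hom C (Dom C f) (Cod C f)" "g \<in> hom C (Dom C f) (Cod C f)" using assms by (auto simp: hom_def)
  then have "add f g \<in> hom C (Dom C f) (Cod C f)" using pre assms unfolding preadditive_def by simp
  then show "add f g \<in> Ar C" "Dom C (add f g) = Dom C f" "Cod C (add f g) = Cod C f" by (auto simp: hom_def)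
qed

lemma pre1: "X \<in> Ob C \<Longrightarrow> Y \<in> Ob C \<Longrightarrow> f \<in> hom C X Y \<Longrightarrow> g \<in> hom C X Y \<Longrightarrow> add f g = add g f"
  using pre unfolding preadditive_def by blast
lemma pre2: "X \<in> Ob C \<Longrightarrow> Y \<in> Ob C \<Longrightarrow> f \<in> hom C X Y \<Longrightarrow> g \<in> hom C X Y \<Longrightarrow> h \<in> hom C X Y \<Longrightarrow> add (add f g) h = add f (add g h)"
  using pre unfolding preadditive_def by blast
lemma pre3: "X \<in> Ob C \<Longrightarrow> Y \<in> Ob C \<Longrightarrow> f \<in> hom C X Y \<Longrightarrow> add f (zr X Y) = f"
  using pre unfolding preadditive_def by blast
lemma pre4: "X \<in> Ob C \<Longrightarrow> Y \<in> Ob C \<Longrightarrow> f \<in> hom C X Y \<Longrightarrow> \<exists>g\<in>hom C X Y. add f g = zr X Y"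
  using pre unfolding preadditive_def by blast
lemma pre5: "X \<in> Ob C \<Longrightarrow> Y \<in> Ob C \<Longrightarrow> Z \<in> Ob C \<Longrightarrow> f \<in> hom C X Y \<Longrightarrow> g \<in> hom C Y Z \<Longrightarrow> h \<in> hom C Y Z \<Longrightarrow>
        Comp C (add g h) f = add (Comp C g f) (Comp C h f)"
  using pre unfolding preadditive_def by blast
lemma pre6: "X \<in> Ob C \<Longrightarrow> Y \<in> Ob C \<Longrightarrow> Z \<in> Ob C \<Longrightarrow> f \<in> hom C X Y \<Longrightarrow> g \<in> hom C X Y \<Longrightarrow> h \<in> hom C Y Z \<Longrightarrow>
        Comp C h (add f g) = add (Comp C h f) (Comp C h g)"
  using pre unfolding preadditive_def by blast

lemma add_zr[simp]: "f \<in> Ar C \<Longrightarrow> Dom C f = X \<Longrightarrow> Cod C f = Y \<Longrightarrow> add f (zr X Y) = f"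
  using pre3[of X Y f] by (auto simp: hom_def)

lemma add_comm: "f \<in> Ar C \<Longrightarrow> g \<in> Ar C \<Longrightarrow> Dom C g = Dom C f \<Longrightarrow> Cod C g = Cod C f \<Longrightarrow> add f g = add g f"
  using pre1[of "Dom C f" "Cod C f" f g] by (auto simp: hom_def)

lemma zr_add[simp]: "f \<in> Ar C \<Longrightarrow> Dom C f = X \<Longrightarrow> Cod C f = Y \<Longrightarrow> add (zr X Y) f = f"
  by (metis add_comm add_zr zr_simps Dom_Ob Cod_Ob)

lemma add_assoc: "f \<in> Ar C \<Longrightarrow> g \<in> Ar C \<Longrightarrow> h \<in> Ar C \<Longrightarrow> Dom C g = Dom C f \<Longrightarrow> Cod C g = Cod C f
   \<Longrightarrow> Dom C h = Dom C f \<Longrightarrow> Cod C h = Cod C f \<Longrightarrow> add (add f g) h = add f (add g h)"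
  using pre2[of "Dom C f" "Cod C f" f g h] by (auto simp: hom_def)

lemma neg_ex: "f \<in> Ar C \<Longrightarrow> \<exists>g. g \<in> Ar C \<and> Dom C g = Dom C f \<and> Cod C g = Cod C f \<and> add f g = zr (Dom C f) (Cod C f)"
  using pre4[of "Dom C f" "Cod C f" f] by (auto simp: hom_def)

lemma distR: "f \<in> Ar C \<Longrightarrow> g \<in> Ar C \<Longrightarrow> h \<in> Ar C \<Longrightarrow> Dom C h = Dom C g \<Longrightarrow> Cod C h = Cod C g
   \<Longrightarrow> Cod C f = Dom C g \<Longrightarrow> Comp C (add g h) f = add (Comp C g f) (Comp C h f)"
  using pre5[of "Dom C f" "Cod C f" "Cod C g" f g h] by (auto simp: hom_def)

lemma distL: "f \<in> Ar C \<Longrightarrow> g \<in> Ar C \<Longrightarrow> h \<in> Ar C \<Longrightarrow> Dom C g = Dom C f \<Longrightarrow> Cod C g = Cod C f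
   \<Longrightarrow> Cod C f = Dom C h \<Longrightarrow> Comp C h (add f g) = add (Comp C h f) (Comp C h g)"
  using pre6[of "Dom C f" "Cod C f" "Cod C h" f g h] by (auto simp: hom_def)

lemma idem_zero:
  assumes a: "a \<in> Ar C" and aa: "add a a = a"
  shows "a = zr (Dom C a) (Cod C a)"
proof -
  obtain n where n: "n \<in> Ar C" "Dom C n = Dom C a" "Cod C n = Cod C a" "add a n = zr (Dom C a) (Cod C a)"
    using neg_ex[OF a] by blast
  have "zr (Dom C a) (Cod C a) = add (add a a) n" using aa n by simp
  also have "\<dots> = add a (add a n)" using add_assoc a n by simp
  also have "\<dots> = a" using n a by simp
  finally show ?thesis by simp
qed

lemma zr_comp[simp]:
  assumes f: "f \<in> Ar C" "Cod C f = Y" and Z: "Z \<in> Ob C"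
  shows "Comp C (zr Y Z) f = zr (Dom C f) Z"
proof -
  have Y: "Y \<in> Ob C" using f by auto
  let ?a = "Comp C (zr Y Z) f"
  have "add (zr Y Z) (zr Y Z) = zr Y Z" using Y Z by simp
  then have "?a = Comp C (add (zr Y Z) (zr Y Z)) f" by simp
  also have "\<dots> = add ?a ?a" using distR[of f "zr Y Z" "zr Y Z"] f Y Z by simp
  finally have "add ?a ?a = ?a" by simp
  then show ?thesis using idem_zero[of ?a] f Y Z by simp
qed

lemma comp_zr[simp]:
  assumes f: "f \<in> Ar C" "Dom C f = Y" and X: "X \<in> Ob C"
  shows "Comp C f (zr X Y) = zr X (Cod C f)"
proof -
  have Y: "Y \<in> Ob C" using f by auto
  let ?a = "Comp C f (zr X Y)"
  have "add (zr X Y) (zr X Y) = zr X Y" using Y X by simp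
  then have "?a = Comp C f (add (zr X Y) (zr X Y))" by simp
  also have "\<dots> = add ?a ?a" using distL[of "zr X Y" "zr X Y" f] f Y X by simp
  finally have "add ?a ?a = ?a" by simp
  then show ?thesis using idem_zero[of ?a] f Y X by simp
qed

lemma zero_obj_ex: "\<exists>Z. zero_object C Z" using ab unfolding abelian_def by blast

lemma zero_mor_iff:
  assumes f: "f \<in> Ar C"
  shows "zero_mor C f \<longleftrightarrow> f = zr (Dom C f) (Cod C f)"
proof
  assume "zero_mor C f"
  then obtain Z a b where Z: "zero_object C Z" and a: "a \<in> hom C (Dom C f) Z" and b: "b \<in> hom C Z (Cod C f)"
    and fe: "f = Comp C b a" unfolding zero_mor_def by blast
  have ZO: "Z \<in> Ob C" using Z unfolding zero_object_def by blast
  have "zr (Dom C f) Z \<in> hom C (Dom C f) Z" using f ZO by (simp add: hom_def)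
  moreover have "\<exists>!g. g \<in> hom C (Dom C f) Z" using Z f unfolding zero_object_def by auto
  ultimately have "a = zr (Dom C f) Z" using a by blast
  then have "f = Comp C b (zr (Dom C f) Z)" using fe by simp
  also have "\<dots> = zr (Dom C f) (Cod C f)" using b f ZO comp_zr[of b Z "Dom C f"] by (simp add: hom_def)
  finally show "f = zr (Dom C f) (Cod C f)" .
next
  assume fz: "f = zr (Dom C f) (Cod C f)"
  obtain Z where Z: "zero_object C Z" using zero_obj_ex by blast
  have ZO: "Z \<in> Ob C" using Z unfolding zero_object_def by blast
  have "Comp C (zr Z (Cod C f)) (zr (Dom C f) Z) = zr (Dom C f) (Cod C f)" using f ZO by simp
  then show "zero_mor C f" unfolding zero_mor_def using f Z ZO fz
    by (intro conjI exI[of _ Z] bexI[of _ "zr (Dom C f) Z"] bexI[of _ "zr Z (Cod C f)"]) (auto simp: hom_def)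
qed

end

lemma ex1_eq: "\<exists>!u. P u \<Longrightarrow> P a \<Longrightarrow> P b \<Longrightarrow> a = b" by blast

context abcat begin

lemma kerD:
  assumes "is_kernel C f k"
  shows "f \<in> Ar C" "k \<in> Ar C" "Cod C k = Dom C f" "Comp C f k = zr (Dom C k) (Cod C f)"
    "\<And>k'. k' \<in> Ar C \<Longrightarrow> Cod C k' = Dom C f \<Longrightarrow> Comp C f k' = zr (Dom C k') (Cod C f) \<Longrightarrow>
        \<exists>!u. u \<in> hom C (Dom C k') (Dom C k) \<and> Comp C k u = k'"
proof -
  have A: "f \<in> Ar C" "k \<in> Ar C" "Cod C k = Dom C f" "zero_mor C (Comp C f k)"
    and U: "\<forall>k'\<in>Ar C. Cod C k' = Dom C f \<longrightarrow> zero_mor C (Comp C f k') \<longrightarrow>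
        (\<exists>!u. u \<in> hom C (Dom C k') (Dom C k) \<and> Comp C k u = k')"
    using assms unfolding is_kernel_def by blast+
  show "f \<in> Ar C" "k \<in> Ar C" "Cod C k = Dom C f" using A by blast+
  show "Comp C f k = zr (Dom C k) (Cod C f)" using A zero_mor_iff[of "Comp C f k"] by simp
  fix k' assume k': "k' \<in> Ar C" "Cod C k' = Dom C f" "Comp C f k' = zr (Dom C k') (Cod C f)"
  then have "zero_mor C (Comp C f k')" using A zero_mor_iff[of "Comp C f k'"] by simp
  then show "\<exists>!u. u \<in> hom C (Dom C k') (Dom C k) \<and> Comp C k u = k'" using U k' by blast
qed

lemma cokD:
  assumes "is_cokernel C f d"
  shows "f \<in> Ar C" "d \<in> Ar C" "Dom C d = Cod C f" "Comp C d f = zr (Dom C f) (Cod C d)"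
    "\<And>d'. d' \<in> Ar C \<Longrightarrow> Dom C d' = Cod C f \<Longrightarrow> Comp C d' f = zr (Dom C f) (Cod C d') \<Longrightarrow>
        \<exists>!u. u \<in> hom C (Cod C d) (Cod C d') \<and> Comp C u d = d'"
proof -
  have A: "f \<in> Ar C" "d \<in> Ar C" "Dom C d = Cod C f" "zero_mor C (Comp C d f)"
    and U: "\<forall>d'\<in>Ar C. Dom C d' = Cod C f \<longrightarrow> zero_mor C (Comp C d' f) \<longrightarrow>
        (\<exists>!u. u \<in> hom C (Cod C d) (Cod C d') \<and> Comp C u d = d')"
    using assms unfolding is_cokernel_def by blast+
  show "f \<in> Ar C" "d \<in> Ar C" "Dom C d = Cod C f" using A by blast+
  show "Comp C d f = zr (Dom C f) (Cod C d)" using A zero_mor_iff[of "Comp C d f"] by simp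
  fix d' assume d': "d' \<in> Ar C" "Dom C d' = Cod C f" "Comp C d' f = zr (Dom C f) (Cod C d')"
  then have "zero_mor C (Comp C d' f)" using A zero_mor_iff[of "Comp C d' f"] by simp
  then show "\<exists>!u. u \<in> hom C (Cod C d) (Cod C d') \<and> Comp C u d = d'" using U d' by blast
qed

lemma ker_mono:
  assumes K: "is_kernel C f k" shows "mono C k"
  unfolding mono_def
proof (intro conjI ballI impI)
  note kd = kerD(1-4)[OF K] and ku = kerD(5)[OF K]
  show "k \<in> Ar C" by (rule kd(2))
  fix g h assume g: "g \<in> Ar C" and h: "h \<in> Ar C" and gc: "Cod C g = Dom C k" and hc: "Cod C h = Dom C k"
    and dd: "Dom C g = Dom C h" and eq: "Comp C k g = Comp C k h"
  let ?k' = "Comp C k g"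
  have a: "?k' \<in> Ar C" "Cod C ?k' = Dom C f" using g gc kd(2,3) by simp_all
  have "Comp C f ?k' = Comp C (Comp C f k) g" using assoc[of g k f] g gc kd(1,2,3) by simp
  also have "\<dots> = zr (Dom C ?k') (Cod C f)" using kd g gc by simp
  finally have fk: "Comp C f ?k' = zr (Dom C ?k') (Cod C f)" .
  have U: "\<exists>!u. u \<in> hom C (Dom C ?k') (Dom C k) \<and> Comp C k u = ?k'" by (rule ku[OF a fk])
  have gh: "g \<in> hom C (Dom C ?k') (Dom C k)" "h \<in> hom C (Dom C ?k') (Dom C k)"
    using g h gc hc dd kd by (auto simp: hom_def)
  show "g = h" by (rule ex1_eq[OF U]) (use gh eq in simp_all)
qed

lemma cok_epi:
  assumes K: "is_cokernel C f d" shows "epi C d"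
  unfolding epi_def
proof (intro conjI ballI impI)
  note kd = cokD(1-4)[OF K] and ku = cokD(5)[OF K]
  show "d \<in> Ar C" by (rule kd(2))
  fix g h assume g: "g \<in> Ar C" and h: "h \<in> Ar C" and gc: "Dom C g = Cod C d" and hc: "Dom C h = Cod C d"
    and dd: "Cod C g = Cod C h" and eq: "Comp C g d = Comp C h d"
  let ?k' = "Comp C g d"
  have a: "?k' \<in> Ar C" "Dom C ?k' = Cod C f" using g gc kd(2,3) by simp_all
  have "Comp C ?k' f = Comp C g (Comp C d f)" using assoc[of f d g] g gc kd(1,2,3) by simp
  also have "\<dots> = zr (Dom C f) (Cod C ?k')" using kd g gc by simp
  finally have fk: "Comp C ?k' f = zr (Dom C f) (Cod C ?k')" .
  have U: "\<exists>!u. u \<in> hom C (Cod C d) (Cod C ?k') \<and> Comp C u d = ?k'" by (rule ku[OF a fk])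
  have gh: "g \<in> hom C (Cod C d) (Cod C ?k')" "h \<in> hom C (Cod C d) (Cod C ?k')"
    using g h gc hc dd kd by (auto simp: hom_def)
  show "g = h" by (rule ex1_eq[OF U]) (use gh eq in simp_all)
qed

lemma ker_of_cok:
  assumes K: "is_kernel C f m" and D: "is_cokernel C m c"
  shows "is_kernel C c m"
proof -
  note kd = kerD(1-4)[OF K] and ku = kerD(5)[OF K] and cd = cokD(1-4)[OF D] and cu = cokD(5)[OF D]
  obtain w where w: "w \<in> hom C (Cod C c) (Cod C f)" "Comp C w c = f"
    using cu[of f] kd by auto
  have w': "w \<in> Ar C" "Dom C w = Cod C c" "Cod C w = Cod C f" using w(1) by (auto simp: hom_def)
  show ?thesis unfolding is_kernel_def
  proof (intro conjI ballI impI)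
    show "c \<in> Ar C" "m \<in> Ar C" "Cod C m = Dom C c" using cd kd by auto
    show "zero_mor C (Comp C c m)" using cd kd zero_mor_iff[of "Comp C c m"] by simp
    fix k' assume k': "k' \<in> Ar C" "Cod C k' = Dom C c" "zero_mor C (Comp C c k')"
    then have ck: "Comp C c k' = zr (Dom C k') (Cod C c)" using cd zero_mor_iff[of "Comp C c k'"] by simp
    have "Comp C f k' = Comp C w (Comp C c k')" using assoc[of k' c w] k' w' cd w(2) by simp
    also have "\<dots> = zr (Dom C k') (Cod C f)" using ck w' k' by simp
    finally have fk: "Comp C f k' = zr (Dom C k') (Cod C f)" .
    show "\<exists>!u. u \<in> hom C (Dom C k') (Dom C m) \<and> Comp C m u = k'"
      by (rule ku[OF k'(1) _ fk]) (use k' cd kd in simp)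
  qed
qed

lemma cok_of_ker:
  assumes K: "is_cokernel C f e" and D: "is_kernel C e k"
  shows "is_cokernel C k e"
proof -
  note kd = cokD(1-4)[OF K] and ku = cokD(5)[OF K] and cd = kerD(1-4)[OF D] and cu = kerD(5)[OF D]
  obtain w where w: "w \<in> hom C (Dom C f) (Dom C k)" "Comp C k w = f"
    using cu[of f] kd by auto
  have w': "w \<in> Ar C" "Dom C w = Dom C f" "Cod C w = Dom C k" using w(1) by (auto simp: hom_def)
  show ?thesis unfolding is_cokernel_def
  proof (intro conjI ballI impI)
    show "k \<in> Ar C" "e \<in> Ar C" "Dom C e = Cod C k" using cd kd by auto
    show "zero_mor C (Comp C e k)" using cd kd zero_mor_iff[of "Comp C e k"] by simp
    fix k' assume k': "k' \<in> Ar C" "Dom C k' = Cod C k" "zero_mor C (Comp C k' k)"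
    then have ck: "Comp C k' k = zr (Dom C k) (Cod C k')" using cd zero_mor_iff[of "Comp C k' k"] by simp
    have "Comp C k' f = Comp C (Comp C k' k) w" using assoc[of w k k'] k' w' cd w(2) by simp
    also have "\<dots> = zr (Dom C f) (Cod C k')" using ck w' k' by simp
    finally have fk: "Comp C k' f = zr (Dom C f) (Cod C k')" .
    show "\<exists>!u. u \<in> hom C (Cod C e) (Cod C k') \<and> Comp C u e = k'"
      by (rule ku[OF k'(1) _ fk]) (use k' cd kd in simp)
  qed
qed

end

context abcat begin

lemma mono_is_ker: "mono C m \<Longrightarrow> \<exists>f. is_kernel C f m" using ab unfolding abelian_def by blast
lemma epi_is_cok: "epi C m \<Longrightarrow> \<exists>f. is_cokernel C f m" using ab unfolding abelian_def by blast
lemma ex_ker: "f \<in> Ar C \<Longrightarrow> \<exists>k. is_kernel C f k" using ab unfolding abelian_def by blast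
lemma ex_cok: "f \<in> Ar C \<Longrightarrow> \<exists>k. is_cokernel C f k" using ab unfolding abelian_def by blast

lemma spec_mono_section:
  assumes S: "spectral C" and M: "mono C m" shows "section_mor C m"
proof -
  obtain f where K: "is_kernel C f m" using mono_is_ker[OF M] by blast
  have mA: "m \<in> Ar C" using M unfolding mono_def by blast
  obtain c where D: "is_cokernel C m c" using ex_cok[OF mA] by blast
  have "short_exact C m c" unfolding short_exact_def
    using M cok_epi[OF D] cokD(3)[OF D] ker_of_cok[OF K D] by simp
  then show ?thesis using S unfolding spectral_def by blast
qed

lemma spec_epi_retraction:
  assumes S: "spectral C" and E: "epi C e" shows "retraction_mor C e"
proof -
  obtain f where K: "is_cokernel C f e" using epi_is_cok[OF E] by blast
  have eA: "e \<in> Ar C" using E unfolding epi_def by blast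
  obtain k where D: "is_kernel C e k" using ex_ker[OF eA] by blast
  note kd = kerD(1-4)[OF D]
  have "short_exact C k e" unfolding short_exact_def
    using E ker_mono[OF D] kd(3) D by simp
  then have "section_mor C k" using S unfolding spectral_def by blast
  then obtain s where s: "s \<in> hom C (Cod C k) (Dom C k)" "Comp C s k = Id C (Dom C k)"
    unfolding section_mor_def by blast
  have sA: "s \<in> Ar C" "Dom C s = Dom C e" "Cod C s = Dom C k" using s kd by (auto simp: hom_def)
  define B where "B = Dom C e"
  define K where "K = Dom C k"
  define Q where "Q = Cod C e"
  have BO: "B \<in> Ob C" "K \<in> Ob C" "Q \<in> Ob C" unfolding B_def K_def Q_def using eA kd by auto
  have kA: "k \<in> Ar C" "Dom C k = K" "Cod C k = B" using kd unfolding K_def B_def by auto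
  have eA': "Dom C e = B" "Cod C e = Q" unfolding B_def Q_def by auto
  have sA': "Dom C s = B" "Cod C s = K" using sA unfolding B_def K_def by auto
  have ek: "Comp C e k = zr K Q" using kd(4) kA eA' by simp
  let ?ks = "Comp C k s"
  have ksA: "?ks \<in> Ar C" "Dom C ?ks = B" "Cod C ?ks = B" using kA sA sA' by auto
  obtain n where n: "n \<in> Ar C" "Dom C n = B" "Cod C n = B" "add ?ks n = zr B B"
    using neg_ex[OF ksA(1)] ksA by auto
  let ?phi = "add (Id C B) n"
  have phA: "?phi \<in> Ar C" "Dom C ?phi = B" "Cod C ?phi = B" using n BO by auto
  have kskk: "Comp C ?ks k = k"
  proof -
    have "Comp C ?ks k = Comp C k (Comp C s k)" using assoc[of k s k] kA sA sA' by simp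
    also have "\<dots> = k" using s(2) kA by simp
    finally show ?thesis .
  qed
  have "zr K B = Comp C (add ?ks n) k" using n kA BO by simp
  also have "\<dots> = add (Comp C ?ks k) (Comp C n k)" using distR[of k ?ks n] n kA ksA by simp
  finally have z1: "add k (Comp C n k) = zr K B" using kskk by simp
  have "Comp C ?phi k = add (Comp C (Id C B) k) (Comp C n k)" using distR[of k "Id C B" n] n kA BO by simp
  also have "\<dots> = zr K B" using z1 kA by simp
  finally have phk: "Comp C ?phi k = zr (Dom C k) (Cod C ?phi)" using kA phA by simp
  have CK: "is_cokernel C k e" by (rule cok_of_ker[OF K D])
  obtain t where t: "t \<in> hom C (Cod C e) (Cod C ?phi)" "Comp C t e = ?phi"
    using cokD(5)[OF CK phA(1) _ phk] phA kA by auto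
  have tA: "t \<in> Ar C" "Dom C t = Q" "Cod C t = B" using t phA eA' by (auto simp: hom_def)
  have eks: "Comp C e ?ks = zr B Q"
  proof -
    have "Comp C e ?ks = Comp C (Comp C e k) s" using assoc[of s k e] kA sA sA' eA eA' by simp
    also have "\<dots> = zr B Q" using ek sA sA' BO by simp
    finally show ?thesis .
  qed
  have "zr B Q = Comp C e (add ?ks n)" using n eA eA' BO by simp
  also have "\<dots> = add (Comp C e ?ks) (Comp C e n)" using distL[of ?ks n e] n eA eA' ksA by simp
  also have "\<dots> = Comp C e n" using eks n eA eA' by simp
  finally have en: "Comp C e n = zr B Q" by simp
  have "Comp C e ?phi = add (Comp C e (Id C B)) (Comp C e n)" using distL[of "Id C B" n e] n eA eA' BO by simp
  also have "\<dots> = e" using en eA eA' by simp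
  finally have ephi: "Comp C e ?phi = e" .
  have "Comp C (Comp C e t) e = Comp C e (Comp C t e)" using assoc[of e t e] eA eA' tA by simp
  also have "\<dots> = Comp C (Id C Q) e" using t(2) ephi eA eA' by simp
  finally have "Comp C e t = Id C Q"
    using E unfolding epi_def using eA eA' tA BO by (metis comp_simps Id_simps)
  then show ?thesis unfolding retraction_mor_def using eA eA' tA by (auto simp: hom_def)
qed

lemma spec_inj: assumes S: "spectral C" and X: "X \<in> Ob C" shows "injective_obj C X"
  unfolding injective_obj_def
proof (intro conjI allI impI X)
  fix m f assume M: "mono C m" and f: "f \<in> hom C (Dom C m) X"
  obtain r where r: "r \<in> hom C (Cod C m) (Dom C m)" "Comp C r m = Id C (Dom C m)"
    using spec_mono_section[OF S M] unfolding section_mor_def by blast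
  have mA: "m \<in> Ar C" using M unfolding mono_def by blast
  have rA: "r \<in> Ar C" "Dom C r = Cod C m" "Cod C r = Dom C m" using r by (auto simp: hom_def)
  have fA: "f \<in> Ar C" "Dom C f = Dom C m" "Cod C f = X" using f by (auto simp: hom_def)
  have "Comp C (Comp C f r) m = Comp C f (Comp C r m)" using assoc[of m r f] mA rA fA by simp
  also have "\<dots> = f" using r(2) fA by simp
  finally show "\<exists>h\<in>hom C (Cod C m) X. Comp C h m = f" using rA fA mA
    by (intro bexI[of _ "Comp C f r"]) (auto simp: hom_def)
qed

lemma spec_proj: assumes S: "spectral C" and X: "X \<in> Ob C" shows "projective_obj C X"
  unfolding projective_obj_def
proof (intro conjI allI impI X)
  fix m f assume M: "epi C m" and f: "f \<in> hom C X (Cod C m)"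
  obtain r where r: "r \<in> hom C (Cod C m) (Dom C m)" "Comp C m r = Id C (Cod C m)"
    using spec_epi_retraction[OF S M] unfolding retraction_mor_def by blast
  have mA: "m \<in> Ar C" using M unfolding epi_def by blast
  have rA: "r \<in> Ar C" "Dom C r = Cod C m" "Cod C r = Dom C m" using r by (auto simp: hom_def)
  have fA: "f \<in> Ar C" "Cod C f = Cod C m" "Dom C f = X" using f by (auto simp: hom_def)
  have "Comp C m (Comp C r f) = Comp C (Comp C m r) f" using assoc[of f r m] mA rA fA by simp
  also have "\<dots> = f" using r(2) fA by simp
  finally show "\<exists>h\<in>hom C X (Dom C m). Comp C m h = f" using rA fA mA
    by (intro bexI[of _ "Comp C r f"]) (auto simp: hom_def)
qed

lemma Id_mono: assumes X: "X \<in> Ob C" shows "mono C (Id C X)"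
  unfolding mono_def using X by auto

lemma Id_epi: assumes X: "X \<in> Ob C" shows "epi C (Id C X)"
  unfolding epi_def using X by auto

lemma spec_all:
  assumes S: "spectral C"
  shows "enough_injectives C" "enough_projectives C"
    "\<And>M N i. MF_split C M N i" "\<And>M N i. dual_MF_split C M N i"
proof -
  show "enough_injectives C" unfolding enough_injectives_def
    using spec_inj[OF S] Id_mono Id_simps by (metis homI)
  show "enough_projectives C" unfolding enough_projectives_def
    using spec_proj[OF S] Id_epi Id_simps by (metis homI)
  fix M N i
  show "MF_split C M N i" unfolding MF_split_def
    using spec_mono_section[OF S] ker_mono by blast
  show "dual_MF_split C M N i" unfolding dual_MF_split_def
    using spec_epi_retraction[OF S] cok_epi by blast
qed

end

context abcat begin

lemma mono_cancel:
  assumes "mono C m" "a \<in> Ar C" "b \<in> Ar C" "Cod C a = Dom C m" "Cod C b = Dom C m" "Dom C a = Dom C b"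
    "Comp C m a = Comp C m b"
  shows "a = b" using assms unfolding mono_def by blast

lemma epi_cancel:
  assumes "epi C m" "a \<in> Ar C" "b \<in> Ar C" "Dom C a = Cod C m" "Dom C b = Cod C m" "Cod C a = Cod C b"
    "Comp C a m = Comp C b m"
  shows "a = b" using assms unfolding epi_def by blast

lemma prodD:
  assumes "is_product C A B P p1 p2"
  shows "p1 \<in> Ar C" "Dom C p1 = P" "Cod C p1 = A" "p2 \<in> Ar C" "Dom C p2 = P" "Cod C p2 = B"
  using assms unfolding is_product_def hom_def by auto

lemma prod_ex:
  assumes "is_product C A B P p1 p2" "a \<in> Ar C" "b \<in> Ar C" "Dom C a = Y" "Dom C b = Y" "Cod C a = A" "Cod C b = B"
  shows "\<exists>w. w \<in> Ar C \<and> Dom C w = Y \<and> Cod C w = P \<and> Comp C p1 w = a \<and> Comp C p2 w = b"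
proof -
  have Y: "Y \<in> Ob C" using assms by auto
  have "\<forall>X\<in>Ob C. \<forall>f\<in>hom C X A. \<forall>g\<in>hom C X B. \<exists>!u. u \<in> hom C X P \<and> Comp C p1 u = f \<and> Comp C p2 u = g"
    using assms(1) unfolding is_product_def by blast
  then have "\<exists>!u. u \<in> hom C Y P \<and> Comp C p1 u = a \<and> Comp C p2 u = b" using Y assms by (simp add: hom_def)
  then show ?thesis by (auto simp: hom_def)
qed

lemma prod_uniq:
  assumes "is_product C A B P p1 p2" "w \<in> Ar C" "w' \<in> Ar C" "Dom C w = Y" "Dom C w' = Y" "Cod C w = P" "Cod C w' = P"
    "Comp C p1 w = Comp C p1 w'" "Comp C p2 w = Comp C p2 w'"
  shows "w = w'"
proof -
  have Y: "Y \<in> Ob C" using assms by auto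
  note pd = prodD[OF assms(1)]
  have "\<forall>X\<in>Ob C. \<forall>f\<in>hom C X A. \<forall>g\<in>hom C X B. \<exists>!u. u \<in> hom C X P \<and> Comp C p1 u = f \<and> Comp C p2 u = g"
    using assms(1) unfolding is_product_def by blast
  moreover have "Comp C p1 w \<in> hom C Y A" "Comp C p2 w \<in> hom C Y B" using assms pd by (auto simp: hom_def)
  ultimately have U: "\<exists>!u. u \<in> hom C Y P \<and> Comp C p1 u = Comp C p1 w \<and> Comp C p2 u = Comp C p2 w"
    using Y by blast
  show ?thesis by (rule ex1_eq[OF U]) (use assms in \<open>simp_all add: hom_def\<close>)
qed

lemma inj_Ob: "injective_obj C I \<Longrightarrow> I \<in> Ob C" unfolding injective_obj_def by blast
lemma proj_Ob: "projective_obj C I \<Longrightarrow> I \<in> Ob C" unfolding projective_obj_def by blast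

lemma prod_inj:
  assumes Pr: "is_product C A B P p1 p2" and IA: "injective_obj C A" and IB: "injective_obj C B"
  shows "injective_obj C P"
  unfolding injective_obj_def
proof (intro conjI allI impI)
  note pd = prodD[OF Pr]
  show "P \<in> Ob C" using pd by (metis Dom_Ob)
  fix m h assume M: "mono C m" and h: "h \<in> hom C (Dom C m) P"
  have mA: "m \<in> Ar C" using M unfolding mono_def by blast
  have hA: "h \<in> Ar C" "Dom C h = Dom C m" "Cod C h = P" using h by (auto simp: hom_def)
  have "Comp C p1 h \<in> hom C (Dom C m) A" using hA pd by (auto simp: hom_def)
  then obtain h1 where h1: "h1 \<in> hom C (Cod C m) A" "Comp C h1 m = Comp C p1 h"
    using IA M unfolding injective_obj_def by blast
  have "Comp C p2 h \<in> hom C (Dom C m) B" using hA pd by (auto simp: hom_def)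
  then obtain h2 where h2: "h2 \<in> hom C (Cod C m) B" "Comp C h2 m = Comp C p2 h"
    using IB M unfolding injective_obj_def by blast
  have h1A: "h1 \<in> Ar C" "Dom C h1 = Cod C m" "Cod C h1 = A" using h1 by (auto simp: hom_def)
  have h2A: "h2 \<in> Ar C" "Dom C h2 = Cod C m" "Cod C h2 = B" using h2 by (auto simp: hom_def)
  obtain w where w: "w \<in> Ar C" "Dom C w = Cod C m" "Cod C w = P" "Comp C p1 w = h1" "Comp C p2 w = h2"
    using prod_ex[OF Pr h1A(1) h2A(1)] h1A h2A by auto
  have e1: "Comp C p1 (Comp C w m) = Comp C p1 h"
    using assoc[of m w p1] w mA pd h1(2) by simp
  have e2: "Comp C p2 (Comp C w m) = Comp C p2 h"
    using assoc[of m w p2] w mA pd h2(2) by simp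
  have "Comp C w m = h" by (rule prod_uniq[OF Pr _ _ _ _ _ _ e1 e2]) (use w mA hA in simp_all)
  then show "\<exists>h'\<in>hom C (Cod C m) P. Comp C h' m = h" using w by (auto simp: hom_def)
qed

end

context abcat begin

lemma all_inj:
  assumes EI: "enough_injectives C"
    and H: "\<forall>N\<in>Ob C. injective_obj C N \<longrightarrow> (\<forall>i. fully_invariant C N i \<longrightarrow> MF_split C N N i)"
    and X: "X \<in> Ob C"
  shows "injective_obj C X"
proof -
  obtain E u where IE: "injective_obj C E" and U: "mono C u" and uh: "u \<in> hom C X E"
    using EI X unfolding enough_injectives_def by blast
  have EO: "E \<in> Ob C" using inj_Ob[OF IE] .
  have uA: "u \<in> Ar C" "Dom C u = X" "Cod C u = E" using uh by (auto simp: hom_def)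
  obtain f where FK: "is_kernel C f u" using mono_is_ker[OF U] by blast
  note fd = kerD(1-4)[OF FK] and fu = kerD(5)[OF FK]
  define Q where "Q = Cod C f"
  have fA: "f \<in> Ar C" "Dom C f = E" "Cod C f = Q" "Q \<in> Ob C" using fd uA unfolding Q_def by auto
  have fu0: "Comp C f u = zr X Q" using fd(4) uA fA by simp
  obtain E' v where IE': "injective_obj C E'" and V: "mono C v" and vh: "v \<in> hom C Q E'"
    using EI fA unfolding enough_injectives_def by blast
  have E'O: "E' \<in> Ob C" using inj_Ob[OF IE'] .
  have vA: "v \<in> Ar C" "Dom C v = Q" "Cod C v = E'" using vh by (auto simp: hom_def)
  obtain P p1 p2 where Pr: "is_product C E E' P p1 p2" using ab EO E'O unfolding abelian_def by blast
  note pd = prodD[OF Pr]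
  have PO: "P \<in> Ob C" using pd by (metis Dom_Ob)
  have IP: "injective_obj C P" by (rule prod_inj[OF Pr IE IE'])
  define phi where "phi = Comp C v (Comp C f p1)"
  have phiA: "phi \<in> Ar C" "Dom C phi = P" "Cod C phi = E'" unfolding phi_def using vA fA pd by auto
  obtain g where gA: "g \<in> Ar C" "Dom C g = P" "Cod C g = P" and pg1: "Comp C p1 g = zr P E" and pg2: "Comp C p2 g = phi"
    using prod_ex[OF Pr, of "zr P E" phi P] phiA PO EO by auto
  obtain Z where Z: "zero_object C Z" using zero_obj_ex by blast
  have ZO: "Z \<in> Ob C" using Z unfolding zero_object_def by blast
  define i where "i = zr Z P"
  have iA: "i \<in> Ar C" "Dom C i = Z" "Cod C i = P" unfolding i_def using ZO PO by auto
  have FI: "fully_invariant C P i" unfolding fully_invariant_def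
  proof (intro conjI ballI)
    show "Cod C i = P" by (rule iA(3))
    show "mono C i" unfolding mono_def
    proof (intro conjI ballI impI)
      show "i \<in> Ar C" by (rule iA(1))
      fix a b assume "a \<in> Ar C" "b \<in> Ar C" "Cod C a = Dom C i" "Cod C b = Dom C i" "Dom C a = Dom C b"
      then have "a \<in> hom C (Dom C a) Z" "b \<in> hom C (Dom C a) Z" "Dom C a \<in> Ob C" using iA by (auto simp: hom_def)
      moreover have "\<exists>!x. x \<in> hom C (Dom C a) Z" using Z \<open>Dom C a \<in> Ob C\<close> unfolding zero_object_def by blast
      ultimately show "a = b" by blast
    qed
    fix hh assume "hh \<in> hom C P P"
    then have hhA: "hh \<in> Ar C" "Dom C hh = P" "Cod C hh = P" by (auto simp: hom_def)
    have "Comp C hh i = Comp C i (Id C Z)" using hhA iA ZO unfolding i_def by simp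
    then show "\<exists>\<alpha>\<in>hom C (Dom C i) (Dom C i). Comp C hh i = Comp C i \<alpha>" using iA ZO
      by (intro bexI[of _ "Id C Z"]) (auto simp: hom_def)
  qed
  obtain d where DK: "is_cokernel C i d" using ex_cok[OF iA(1)] by blast
  note dd = cokD(1-4)[OF DK] and du = cokD(5)[OF DK]
  define D where "D = Cod C d"
  have dA: "d \<in> Ar C" "Dom C d = P" "Cod C d = D" "D \<in> Ob C" using dd iA unfolding D_def by auto
  have "Comp C (Id C P) i = zr (Dom C i) (Cod C (Id C P))" using iA PO unfolding i_def by simp
  then obtain ud where ud: "ud \<in> hom C (Cod C d) (Cod C (Id C P))" "Comp C ud d = Id C P"
    using du[of "Id C P"] PO iA by auto
  have udA: "ud \<in> Ar C" "Dom C ud = D" "Cod C ud = P" using ud dA PO by (auto simp: hom_def)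
  define G where "G = Comp C d g"
  have GA: "G \<in> Ar C" "Dom C G = P" "Cod C G = D" unfolding G_def using dA gA by auto
  obtain k where KK: "is_kernel C G k" using ex_ker[OF GA(1)] by blast
  note kd = kerD(1-4)[OF KK] and ku = kerD(5)[OF KK]
  define K where "K = Dom C k"
  have kA: "k \<in> Ar C" "Dom C k = K" "Cod C k = P" "K \<in> Ob C" using kd GA unfolding K_def by auto
  have Gk: "Comp C G k = zr K D" using kd(4) kA GA by simp
  have "MF_split C P P i" using H PO IP FI by blast
  then have "section_mor C k" unfolding MF_split_def using gA DK KK unfolding G_def by (auto simp: hom_def)
  then obtain s where s: "s \<in> hom C (Cod C k) (Dom C k)" "Comp C s k = Id C (Dom C k)"
    unfolding section_mor_def by blast
  have sA: "s \<in> Ar C" "Dom C s = P" "Cod C s = K" using s kA by (auto simp: hom_def)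
  have sk: "Comp C s k = Id C K" using s(2) kA by simp
  obtain j where jA: "j \<in> Ar C" "Dom C j = X" "Cod C j = P" and pj1: "Comp C p1 j = u" and pj2: "Comp C p2 j = zr X E'"
    using prod_ex[OF Pr uA(1), of "zr X E'" X] uA X E'O by auto
  have gj1: "Comp C p1 (Comp C g j) = Comp C p1 (zr X P)"
  proof -
    have "Comp C p1 (Comp C g j) = Comp C (Comp C p1 g) j" using assoc[of j g p1] jA gA pd by simp
    also have "\<dots> = zr X E" using pg1 jA EO by simp
    also have "\<dots> = Comp C p1 (zr X P)" using pd X by simp
    finally show ?thesis .
  qed
  have gj2: "Comp C p2 (Comp C g j) = Comp C p2 (zr X P)"
  proof -
    have "Comp C p2 (Comp C g j) = Comp C (Comp C p2 g) j" using assoc[of j g p2] jA gA pd by simp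
    also have "\<dots> = Comp C phi j" using pg2 by simp
    also have "\<dots> = Comp C v (Comp C (Comp C f p1) j)" unfolding phi_def using assoc[of j "Comp C f p1" v] jA fA vA pd by simp
    also have "\<dots> = Comp C v (Comp C f u)" using assoc[of j p1 f] jA fA pd pj1 by simp
    also have "\<dots> = zr X E'" using fu0 vA X by simp
    also have "\<dots> = Comp C p2 (zr X P)" using pd X by simp
    finally show ?thesis .
  qed
  have gj: "Comp C g j = zr X P" by (rule prod_uniq[OF Pr _ _ _ _ _ _ gj1 gj2]) (use gA jA X PO in simp_all)
  have Gj: "Comp C G j = zr (Dom C j) (Cod C G)"
  proof -
    have "Comp C G j = Comp C d (Comp C g j)" unfolding G_def using assoc[of j g d] jA gA dA by simp
    also have "\<dots> = zr X D" using gj dA X by simp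
    finally show ?thesis using jA GA by simp
  qed
  obtain w where w: "w \<in> hom C (Dom C j) (Dom C k)" "Comp C k w = j"
    using ku[OF jA(1) _ Gj] jA GA by auto
  have wA: "w \<in> Ar C" "Dom C w = X" "Cod C w = K" using w jA kA by (auto simp: hom_def)
  have gk: "Comp C g k = zr K P"
  proof -
    have "Comp C g k = Comp C (Comp C ud d) (Comp C g k)" using ud(2) gA kA by simp
    also have "\<dots> = Comp C ud (Comp C d (Comp C g k))" using assoc[of "Comp C g k" d ud] gA kA dA udA by simp
    also have "\<dots> = Comp C ud (Comp C G k)" unfolding G_def using assoc[of k g d] gA kA dA by simp
    also have "\<dots> = zr K P" using Gk udA kA by simp
    finally show ?thesis .
  qed
  have "Comp C v (Comp C f (Comp C p1 k)) = Comp C v (zr K Q)"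
  proof -
    have "Comp C v (Comp C f (Comp C p1 k)) = Comp C v (Comp C (Comp C f p1) k)" using assoc[of k p1 f] kA fA pd by simp
    also have "\<dots> = Comp C phi k" unfolding phi_def using assoc[of k "Comp C f p1" v] kA fA vA pd by simp
    also have "\<dots> = Comp C (Comp C p2 g) k" using pg2 by simp
    also have "\<dots> = Comp C p2 (Comp C g k)" using assoc[of k g p2] kA gA pd by simp
    also have "\<dots> = zr K E'" using gk pd kA by simp
    also have "\<dots> = Comp C v (zr K Q)" using vA kA by simp
    finally show ?thesis .
  qed
  then have fpk: "Comp C f (Comp C p1 k) = zr K Q"
    by (rule mono_cancel[OF V, rotated -1]) (use fA kA pd vA in simp_all)
  obtain t where t: "t \<in> hom C (Dom C (Comp C p1 k)) (Dom C u)" "Comp C u t = Comp C p1 k"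
    using fu[of "Comp C p1 k"] fpk kA fA pd uA by auto
  have tA: "t \<in> Ar C" "Dom C t = K" "Cod C t = X" using t kA pd uA by (auto simp: hom_def)
  have "Comp C u (Comp C t w) = Comp C u (Id C X)"
  proof -
    have "Comp C u (Comp C t w) = Comp C (Comp C u t) w" using assoc[of w t u] wA tA uA by simp
    also have "\<dots> = Comp C p1 (Comp C k w)" using t(2) assoc[of w k p1] wA kA pd by simp
    also have "\<dots> = Comp C u (Id C X)" using w(2) pj1 uA by simp
    finally show ?thesis .
  qed
  then have tw: "Comp C t w = Id C X"
    by (rule mono_cancel[OF U, rotated -1]) (use tA wA uA X in simp_all)
  obtain e where eA: "e \<in> Ar C" "Dom C e = E" "Cod C e = P" and pe1: "Comp C p1 e = Id C E" and pe2: "Comp C p2 e = zr E E'"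
    using prod_ex[OF Pr, of "Id C E" "zr E E'" E] EO E'O by auto
  have eu1: "Comp C p1 (Comp C e u) = Comp C p1 j"
    using assoc[of u e p1] eA uA pd pe1 pj1 by simp
  have eu2: "Comp C p2 (Comp C e u) = Comp C p2 j"
    using assoc[of u e p2] eA uA pd pe2 pj2 E'O by simp
  have eu: "Comp C e u = j" by (rule prod_uniq[OF Pr _ _ _ _ _ _ eu1 eu2]) (use eA uA jA in simp_all)
  define r where "r = Comp C t (Comp C s e)"
  have rA: "r \<in> Ar C" "Dom C r = E" "Cod C r = X" unfolding r_def using tA sA eA by auto
  have ru: "Comp C r u = Id C X"
  proof -
    have "Comp C r u = Comp C t (Comp C (Comp C s e) u)" unfolding r_def
      using assoc[of u "Comp C s e" t] tA sA eA uA by simp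
    also have "\<dots> = Comp C t (Comp C s j)" using assoc[of u e s] sA eA uA eu by simp
    also have "\<dots> = Comp C t (Comp C (Comp C s k) w)" using assoc[of w k s] sA kA wA w(2) by simp
    also have "\<dots> = Id C X" using sk wA tw by simp
    finally show ?thesis .
  qed
  show ?thesis unfolding injective_obj_def
  proof (intro conjI allI impI X)
    fix m h assume M: "mono C m" and h: "h \<in> hom C (Dom C m) X"
    have mA: "m \<in> Ar C" using M unfolding mono_def by blast
    have hA: "h \<in> Ar C" "Dom C h = Dom C m" "Cod C h = X" using h by (auto simp: hom_def)
    have "Comp C u h \<in> hom C (Dom C m) E" using hA uA by (auto simp: hom_def)
    then obtain h' where h': "h' \<in> hom C (Cod C m) E" "Comp C h' m = Comp C u h"
      using IE M unfolding injective_obj_def by blast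
    have h'A: "h' \<in> Ar C" "Dom C h' = Cod C m" "Cod C h' = E" using h' by (auto simp: hom_def)
    have "Comp C (Comp C r h') m = Comp C r (Comp C u h)" using assoc[of m h' r] mA h'A rA h'(2) by simp
    also have "\<dots> = Comp C (Comp C r u) h" using assoc[of h u r] hA uA rA by simp
    also have "\<dots> = h" using ru hA by simp
    finally show "\<exists>h'\<in>hom C (Cod C m) X. Comp C h' m = h" using rA h'A
      by (intro bexI[of _ "Comp C r h'"]) (auto simp: hom_def)
  qed
qed

end

context abcat begin

definition is_coprod where
  "is_coprod A B P q1 q2 \<longleftrightarrow> q1 \<in> Ar C \<and> Dom C q1 = A \<and> Cod C q1 = P \<and> q2 \<in> Ar C \<and> Dom C q2 = B \<and> Cod C q2 = P \<and>
    (\<forall>Y a b. a \<in> Ar C \<longrightarrow> b \<in> Ar C \<longrightarrow> Dom C a = A \<longrightarrow> Dom C b = B \<longrightarrow> Cod C a = Y \<longrightarrow> Cod C b = Y \<longrightarrow>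
        (\<exists>w. w \<in> Ar C \<and> Dom C w = P \<and> Cod C w = Y \<and> Comp C w q1 = a \<and> Comp C w q2 = b)) \<and>
    (\<forall>w w'. w \<in> Ar C \<longrightarrow> w' \<in> Ar C \<longrightarrow> Dom C w = P \<longrightarrow> Dom C w' = P \<longrightarrow> Cod C w = Cod C w' \<longrightarrow>
        Comp C w q1 = Comp C w' q1 \<longrightarrow> Comp C w q2 = Comp C w' q2 \<longrightarrow> w = w')"

lemma coprod_exists:
  assumes AO: "A \<in> Ob C" and BO: "B \<in> Ob C"
  shows "\<exists>P q1 q2. is_coprod A B P q1 q2"
proof -
  obtain P p1 p2 where Pr: "is_product C A B P p1 p2" using ab AO BO unfolding abelian_def by blast
  note pd = prodD[OF Pr]
  have PO: "P \<in> Ob C" using pd by (metis Dom_Ob)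
  obtain q1 where q1: "q1 \<in> Ar C" "Dom C q1 = A" "Cod C q1 = P" "Comp C p1 q1 = Id C A" "Comp C p2 q1 = zr A B"
    using prod_ex[OF Pr, of "Id C A" "zr A B" A] AO BO by auto
  obtain q2 where q2: "q2 \<in> Ar C" "Dom C q2 = B" "Cod C q2 = P" "Comp C p1 q2 = zr B A" "Comp C p2 q2 = Id C B"
    using prod_ex[OF Pr, of "zr B A" "Id C B" B] AO BO by auto
  define S where "S = add (Comp C q1 p1) (Comp C q2 p2)"
  have SA: "S \<in> Ar C" "Dom C S = P" "Cod C S = P" unfolding S_def using q1 q2 pd by auto
  have S1: "Comp C p1 S = Comp C p1 (Id C P)"
  proof -
    have "Comp C p1 S = add (Comp C p1 (Comp C q1 p1)) (Comp C p1 (Comp C q2 p2))"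
      unfolding S_def using distL[of "Comp C q1 p1" "Comp C q2 p2" p1] q1 q2 pd by simp
    also have "\<dots> = add (Comp C (Comp C p1 q1) p1) (Comp C (Comp C p1 q2) p2)"
      using assoc[of p1 q1 p1] assoc[of p2 q2 p1] q1(1-3) q2(1-3) pd by simp
    also have "\<dots> = p1" using q1 q2 pd AO by simp
    finally show ?thesis using pd by simp
  qed
  have S2: "Comp C p2 S = Comp C p2 (Id C P)"
  proof -
    have "Comp C p2 S = add (Comp C p2 (Comp C q1 p1)) (Comp C p2 (Comp C q2 p2))"
      unfolding S_def using distL[of "Comp C q1 p1" "Comp C q2 p2" p2] q1 q2 pd by simp
    also have "\<dots> = add (Comp C (Comp C p2 q1) p1) (Comp C (Comp C p2 q2) p2)"
      using assoc[of p1 q1 p2] assoc[of p2 q2 p2] q1(1-3) q2(1-3) pd by simp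
    also have "\<dots> = p2" using q1 q2 pd BO by simp
    finally show ?thesis using pd by simp
  qed
  have SI: "S = Id C P" by (rule prod_uniq[OF Pr _ _ _ _ _ _ S1 S2]) (use SA PO in simp_all)
  have decomp: "w = add (Comp C (Comp C w q1) p1) (Comp C (Comp C w q2) p2)"
    if w: "w \<in> Ar C" "Dom C w = P" for w
  proof -
    have "w = Comp C w S" using SI w by simp
    also have "\<dots> = add (Comp C w (Comp C q1 p1)) (Comp C w (Comp C q2 p2))"
      unfolding S_def using distL[of "Comp C q1 p1" "Comp C q2 p2" w] q1 q2 pd w by simp
    also have "\<dots> = add (Comp C (Comp C w q1) p1) (Comp C (Comp C w q2) p2)"
      using assoc[of p1 q1 w] assoc[of p2 q2 w] q1(1-3) q2(1-3) pd w by simp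
    finally show ?thesis .
  qed
  have "is_coprod A B P q1 q2" unfolding is_coprod_def
  proof (intro conjI allI impI)
    show "q1 \<in> Ar C" "Dom C q1 = A" "Cod C q1 = P" "q2 \<in> Ar C" "Dom C q2 = B" "Cod C q2 = P"
      using q1 q2 by auto
  next
    fix Y a b assume a: "a \<in> Ar C" and b: "b \<in> Ar C" and ab: "Dom C a = A" "Dom C b = B" "Cod C a = Y" "Cod C b = Y"
    define w where "w = add (Comp C a p1) (Comp C b p2)"
    have wA: "w \<in> Ar C" "Dom C w = P" "Cod C w = Y" unfolding w_def using a b ab pd by auto
    have "Comp C w q1 = add (Comp C (Comp C a p1) q1) (Comp C (Comp C b p2) q1)"
      unfolding w_def using distR[of q1 "Comp C a p1" "Comp C b p2"] a b ab pd q1 by simp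
    also have "\<dots> = add (Comp C a (Comp C p1 q1)) (Comp C b (Comp C p2 q1))"
      using assoc[of q1 p1 a] assoc[of q1 p2 b] a b ab pd q1(1-3) by simp
    also have "\<dots> = a" using q1 a b ab AO by simp
    finally have w1: "Comp C w q1 = a" .
    have "Comp C w q2 = add (Comp C (Comp C a p1) q2) (Comp C (Comp C b p2) q2)"
      unfolding w_def using distR[of q2 "Comp C a p1" "Comp C b p2"] a b ab pd q2 by simp
    also have "\<dots> = add (Comp C a (Comp C p1 q2)) (Comp C b (Comp C p2 q2))"
      using assoc[of q2 p1 a] assoc[of q2 p2 b] a b ab pd q2(1-3) by simp
    also have "\<dots> = b" using q2 a b ab BO by simp
    finally have w2: "Comp C w q2 = b" .
    show "\<exists>w. w \<in> Ar C \<and> Dom C w = P \<and> Cod C w = Y \<and> Comp C w q1 = a \<and> Comp C w q2 = b"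
      using wA w1 w2 by blast
  next
    fix w w' assume "w \<in> Ar C" "w' \<in> Ar C" "Dom C w = P" "Dom C w' = P" "Cod C w = Cod C w'"
      "Comp C w q1 = Comp C w' q1" "Comp C w q2 = Comp C w' q2"
    then show "w = w'" using decomp[of w] decomp[of w'] by metis
  qed
  then show ?thesis by blast
qed

lemma coprod_proj:
  assumes Co: "is_coprod A B P q1 q2" and IA: "projective_obj C A" and IB: "projective_obj C B"
  shows "projective_obj C P"
  unfolding projective_obj_def
proof (intro conjI allI impI)
  have q: "q1 \<in> Ar C" "Dom C q1 = A" "Cod C q1 = P" "q2 \<in> Ar C" "Dom C q2 = B" "Cod C q2 = P"
    using Co unfolding is_coprod_def by blast+
  show "P \<in> Ob C" using q by (metis Cod_Ob)
  fix m h assume M: "epi C m" and h: "h \<in> hom C P (Cod C m)"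
  have mA: "m \<in> Ar C" using M unfolding epi_def by blast
  have hA: "h \<in> Ar C" "Dom C h = P" "Cod C h = Cod C m" using h by (auto simp: hom_def)
  have "Comp C h q1 \<in> hom C A (Cod C m)" using hA q by (auto simp: hom_def)
  then obtain h1 where h1: "h1 \<in> hom C A (Dom C m)" "Comp C m h1 = Comp C h q1"
    using IA M unfolding projective_obj_def by blast
  have "Comp C h q2 \<in> hom C B (Cod C m)" using hA q by (auto simp: hom_def)
  then obtain h2 where h2: "h2 \<in> hom C B (Dom C m)" "Comp C m h2 = Comp C h q2"
    using IB M unfolding projective_obj_def by blast
  have h1A: "h1 \<in> Ar C" "Dom C h1 = A" "Cod C h1 = Dom C m" using h1 by (auto simp: hom_def)
  have h2A: "h2 \<in> Ar C" "Dom C h2 = B" "Cod C h2 = Dom C m" using h2 by (auto simp: hom_def)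
  obtain w where w: "w \<in> Ar C" "Dom C w = P" "Cod C w = Dom C m" "Comp C w q1 = h1" "Comp C w q2 = h2"
    using Co h1A h2A unfolding is_coprod_def by metis
  have e1: "Comp C (Comp C m w) q1 = Comp C h q1"
    using assoc[of q1 w m] w mA q h1(2) by simp
  have e2: "Comp C (Comp C m w) q2 = Comp C h q2"
    using assoc[of q2 w m] w mA q h2(2) by simp
  have "Comp C m w = h" using Co e1 e2 w mA hA unfolding is_coprod_def by simp
  then show "\<exists>h'\<in>hom C P (Dom C m). Comp C m h' = h" using w by (auto simp: hom_def)
qed

end

context abcat begin

lemma coprD:
  assumes "is_coprod A B P q1 q2"
  shows "q1 \<in> Ar C" "Dom C q1 = A" "Cod C q1 = P" "q2 \<in> Ar C" "Dom C q2 = B" "Cod C q2 = P"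
  using assms unfolding is_coprod_def by blast+

lemma copr_ex:
  assumes "is_coprod A B P q1 q2" "a \<in> Ar C" "b \<in> Ar C" "Dom C a = A" "Dom C b = B" "Cod C a = Y" "Cod C b = Y"
  shows "\<exists>w. w \<in> Ar C \<and> Dom C w = P \<and> Cod C w = Y \<and> Comp C w q1 = a \<and> Comp C w q2 = b"
  using assms unfolding is_coprod_def by blast

lemma copr_uniq:
  assumes "is_coprod A B P q1 q2" "w \<in> Ar C" "w' \<in> Ar C" "Dom C w = P" "Dom C w' = P" "Cod C w = Cod C w'"
        "Comp C w q1 = Comp C w' q1" "Comp C w q2 = Comp C w' q2"
  shows "w = w'"
  using assms unfolding is_coprod_def by blast

lemma all_proj:
  assumes EP: "enough_projectives C"
    and H: "\<forall>N\<in>Ob C. projective_obj C N \<longrightarrow> (\<forall>i. fully_invariant C N i \<longrightarrow> dual_MF_split C N N i)"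
    and X: "X \<in> Ob C"
  shows "projective_obj C X"
proof -
  obtain E e where IE: "projective_obj C E" and EE: "epi C e" and eh: "e \<in> hom C E X"
    using EP X unfolding enough_projectives_def by blast
  have EO: "E \<in> Ob C" using proj_Ob[OF IE] .
  have eA: "e \<in> Ar C" "Dom C e = E" "Cod C e = X" using eh by (auto simp: hom_def)
  obtain f where FK: "is_cokernel C f e" using epi_is_cok[OF EE] by blast
  note fd = cokD(1-4)[OF FK] and fu = cokD(5)[OF FK]
  define Q where "Q = Dom C f"
  have fA: "f \<in> Ar C" "Cod C f = E" "Dom C f = Q" "Q \<in> Ob C" using fd eA unfolding Q_def by auto
  have ef0: "Comp C e f = zr Q X" using fd(4) eA fA by simp
  obtain E' v where IE': "projective_obj C E'" and V: "epi C v" and vh: "v \<in> hom C E' Q"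
    using EP fA unfolding enough_projectives_def by blast
  have E'O: "E' \<in> Ob C" using proj_Ob[OF IE'] .
  have vA: "v \<in> Ar C" "Dom C v = E'" "Cod C v = Q" using vh by (auto simp: hom_def)
  obtain P q1 q2 where Co: "is_coprod E E' P q1 q2" using coprod_exists EO E'O by blast
  note pd = coprD[OF Co]
  have PO: "P \<in> Ob C" using pd by (metis Cod_Ob)
  have IP: "projective_obj C P" by (rule coprod_proj[OF Co IE IE'])
  define phi where "phi = Comp C q1 (Comp C f v)"
  have phiA: "phi \<in> Ar C" "Dom C phi = E'" "Cod C phi = P" unfolding phi_def using vA fA pd by auto
  obtain g where gA: "g \<in> Ar C" "Dom C g = P" "Cod C g = P" and pg1: "Comp C g q1 = zr E P" and pg2: "Comp C g q2 = phi"
    using copr_ex[OF Co, of "zr E P" phi P] phiA PO EO by auto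
  define i where "i = Id C P"
  have iA: "i \<in> Ar C" "Dom C i = P" "Cod C i = P" unfolding i_def using PO by auto
  have FI: "fully_invariant C P i" unfolding fully_invariant_def
  proof (intro conjI ballI)
    show "Cod C i = P" by (rule iA(3))
    show "mono C i" unfolding i_def by (rule Id_mono[OF PO])
    fix hh assume "hh \<in> hom C P P"
    then have hhA: "hh \<in> Ar C" "Dom C hh = P" "Cod C hh = P" by (auto simp: hom_def)
    have "Comp C hh i = Comp C i hh" using hhA PO unfolding i_def by simp
    then show "\<exists>\<alpha>\<in>hom C (Dom C i) (Dom C i). Comp C hh i = Comp C i \<alpha>" using iA hhA
      by (intro bexI[of _ hh]) (auto simp: hom_def)
  qed
  obtain c where CK0: "is_cokernel C (Comp C g i) c" using ex_cok[of "Comp C g i"] gA iA by auto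
  have gi: "Comp C g i = g" unfolding i_def using gA by simp
  have CK: "is_cokernel C g c" using CK0 gi by simp
  note cd = cokD(1-4)[OF CK] and cu = cokD(5)[OF CK]
  define D where "D = Cod C c"
  have cA: "c \<in> Ar C" "Dom C c = P" "Cod C c = D" "D \<in> Ob C" using cd gA unfolding D_def by auto
  have cg: "Comp C c g = zr P D" using cd(4) cA gA by simp
  have "dual_MF_split C P P i" using H PO IP FI by blast
  then have "retraction_mor C c" unfolding dual_MF_split_def using gA CK0 by (auto simp: hom_def)
  then obtain s where s: "s \<in> hom C (Cod C c) (Dom C c)" "Comp C c s = Id C (Cod C c)"
    unfolding retraction_mor_def by blast
  have sA: "s \<in> Ar C" "Dom C s = D" "Cod C s = P" using s cA by (auto simp: hom_def)
  have cs: "Comp C c s = Id C D" using s(2) cA by simp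
  obtain j where jA: "j \<in> Ar C" "Dom C j = P" "Cod C j = X" and pj1: "Comp C j q1 = e" and pj2: "Comp C j q2 = zr E' X"
    using copr_ex[OF Co eA(1), of "zr E' X" X] eA X E'O by auto
  have gj1: "Comp C (Comp C j g) q1 = Comp C (zr P X) q1"
  proof -
    have "Comp C (Comp C j g) q1 = Comp C j (Comp C g q1)" using assoc[of q1 g j] jA gA pd by simp
    also have "\<dots> = zr E X" using pg1 jA EO by simp
    also have "\<dots> = Comp C (zr P X) q1" using pd X by simp
    finally show ?thesis .
  qed
  have gj2: "Comp C (Comp C j g) q2 = Comp C (zr P X) q2"
  proof -
    have "Comp C (Comp C j g) q2 = Comp C j (Comp C g q2)" using assoc[of q2 g j] jA gA pd by simp
    also have "\<dots> = Comp C j phi" using pg2 by simp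
    also have "\<dots> = Comp C (Comp C j q1) (Comp C f v)" unfolding phi_def using assoc[of "Comp C f v" q1 j] jA fA vA pd by simp
    also have "\<dots> = Comp C (Comp C e f) v" using assoc[of v f e] eA fA vA pj1 by simp
    also have "\<dots> = zr E' X" using ef0 vA X by simp
    also have "\<dots> = Comp C (zr P X) q2" using pd X by simp
    finally show ?thesis .
  qed
  have jg: "Comp C j g = zr P X" by (rule copr_uniq[OF Co _ _ _ _ _ gj1 gj2]) (use gA jA X PO in simp_all)
  obtain w where w: "w \<in> hom C (Cod C c) (Cod C j)" "Comp C w c = j"
    using cu[OF jA(1)] jA gA jg by auto
  have wA: "w \<in> Ar C" "Dom C w = D" "Cod C w = X" using w jA cA by (auto simp: hom_def)
  have "Comp C (Comp C (Comp C c q1) f) v = Comp C (zr Q D) v"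
  proof -
    have "Comp C (Comp C (Comp C c q1) f) v = Comp C (Comp C c q1) (Comp C f v)" using assoc[of v f "Comp C c q1"] cA fA vA pd by simp
    also have "\<dots> = Comp C c phi" unfolding phi_def using assoc[of "Comp C f v" q1 c] cA fA vA pd by simp
    also have "\<dots> = Comp C c (Comp C g q2)" using pg2 by simp
    also have "\<dots> = Comp C (Comp C c g) q2" using assoc[of q2 g c] cA gA pd by simp
    also have "\<dots> = zr E' D" using cg pd cA by simp
    also have "\<dots> = Comp C (zr Q D) v" using vA cA by simp
    finally show ?thesis .
  qed
  then have cqf: "Comp C (Comp C c q1) f = zr Q D"
    by (rule epi_cancel[OF V, rotated -1]) (use fA cA pd vA in simp_all)
  obtain t where t: "t \<in> hom C (Cod C e) (Cod C (Comp C c q1))" "Comp C t e = Comp C c q1"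
    using fu[of "Comp C c q1"] cqf cA fA pd eA by auto
  have tA: "t \<in> Ar C" "Dom C t = X" "Cod C t = D" using t cA pd eA by (auto simp: hom_def)
  have "Comp C (Comp C w t) e = Comp C (Id C X) e"
  proof -
    have "Comp C (Comp C w t) e = Comp C w (Comp C t e)" using assoc[of e t w] wA tA eA by simp
    also have "\<dots> = Comp C (Comp C w c) q1" using t(2) assoc[of q1 c w] wA cA pd by simp
    also have "\<dots> = Comp C (Id C X) e" using w(2) pj1 eA by simp
    finally show ?thesis .
  qed
  then have wt: "Comp C w t = Id C X"
    by (rule epi_cancel[OF EE, rotated -1]) (use tA wA eA X in simp_all)
  obtain pe where peA: "pe \<in> Ar C" "Dom C pe = P" "Cod C pe = E" and pe1: "Comp C pe q1 = Id C E" and pe2: "Comp C pe q2 = zr E' E"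
    using copr_ex[OF Co, of "Id C E" "zr E' E" E] EO E'O by auto
  have eu1: "Comp C (Comp C e pe) q1 = Comp C j q1"
    using assoc[of q1 pe e] peA eA pd pe1 pj1 by simp
  have eu2: "Comp C (Comp C e pe) q2 = Comp C j q2"
    using assoc[of q2 pe e] peA eA pd pe2 pj2 E'O by simp
  have epe: "Comp C e pe = j" by (rule copr_uniq[OF Co _ _ _ _ _ eu1 eu2]) (use peA eA jA in simp_all)
  define r where "r = Comp C pe (Comp C s t)"
  have rA: "r \<in> Ar C" "Dom C r = X" "Cod C r = E" unfolding r_def using tA sA peA by auto
  have er: "Comp C e r = Id C X"
  proof -
    have "Comp C e r = Comp C (Comp C e pe) (Comp C s t)" unfolding r_def
      using assoc[of "Comp C s t" pe e] tA sA peA eA by simp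
    also have "\<dots> = Comp C (Comp C w c) (Comp C s t)" using epe w(2) by simp
    also have "\<dots> = Comp C w (Comp C (Comp C c s) t)"
      using assoc[of "Comp C s t" c w] assoc[of t s c] wA cA sA tA by simp
    also have "\<dots> = Id C X" using cs tA wt by simp
    finally show ?thesis .
  qed
  show ?thesis unfolding projective_obj_def
  proof (intro conjI allI impI X)
    fix m h assume M: "epi C m" and h: "h \<in> hom C X (Cod C m)"
    have mA: "m \<in> Ar C" using M unfolding epi_def by blast
    have hA: "h \<in> Ar C" "Cod C h = Cod C m" "Dom C h = X" using h by (auto simp: hom_def)
    have "Comp C h e \<in> hom C E (Cod C m)" using hA eA by (auto simp: hom_def)
    then obtain h' where h': "h' \<in> hom C E (Dom C m)" "Comp C m h' = Comp C h e"
      using IE M unfolding projective_obj_def by blast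
    have h'A: "h' \<in> Ar C" "Cod C h' = Dom C m" "Dom C h' = E" using h' by (auto simp: hom_def)
    have "Comp C m (Comp C h' r) = Comp C (Comp C h e) r" using assoc[of r h' m] mA h'A rA h'(2) by simp
    also have "\<dots> = Comp C h (Comp C e r)" using assoc[of r e h] hA eA rA by simp
    also have "\<dots> = h" using er hA by simp
    finally show "\<exists>h'\<in>hom C X (Dom C m). Comp C m h' = h" using rA h'A
      by (intro bexI[of _ "Comp C h' r"]) (auto simp: hom_def)
  qed
qed

end

context abcat begin

lemma spec_from_inj:
  assumes EI: "enough_injectives C"
    and H: "\<forall>N\<in>Ob C. injective_obj C N \<longrightarrow> (\<forall>i. fully_invariant C N i \<longrightarrow> MF_split C N N i)"
  shows "spectral C"
  unfolding spectral_def
proof (intro allI impI)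
  fix f g assume SE: "short_exact C f g"
  then have M: "mono C f" unfolding short_exact_def by blast
  have fA: "f \<in> Ar C" using M unfolding mono_def by blast
  have "injective_obj C (Dom C f)" using all_inj[OF EI H] fA by simp
  moreover have "Id C (Dom C f) \<in> hom C (Dom C f) (Dom C f)" using fA by (simp add: hom_def)
  ultimately obtain h where "h \<in> hom C (Cod C f) (Dom C f)" "Comp C h f = Id C (Dom C f)"
    using M unfolding injective_obj_def by blast
  then show "section_mor C f" unfolding section_mor_def using fA by blast
qed

lemma spec_from_proj:
  assumes EP: "enough_projectives C"
    and H: "\<forall>N\<in>Ob C. projective_obj C N \<longrightarrow> (\<forall>i. fully_invariant C N i \<longrightarrow> dual_MF_split C N N i)"
  shows "spectral C"
  unfolding spectral_def
proof (intro allI impI)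
  fix f g assume SE: "short_exact C f g"
  then have M: "mono C f" and EG: "epi C g" and KK: "is_kernel C g f" unfolding short_exact_def by blast+
  note kd = kerD(1-4)[OF KK] and ku = kerD(5)[OF KK]
  define B where "B = Dom C g"
  define K where "K = Dom C f"
  define Q where "Q = Cod C g"
  have BO: "B \<in> Ob C" "K \<in> Ob C" "Q \<in> Ob C" unfolding B_def K_def Q_def using kd by auto
  have fA: "f \<in> Ar C" "Dom C f = K" "Cod C f = B" using kd unfolding K_def B_def by auto
  have gA: "g \<in> Ar C" "Dom C g = B" "Cod C g = Q" using kd unfolding B_def Q_def by auto
  have gf: "Comp C g f = zr K Q" using kd(4) fA gA by simp
  have "projective_obj C Q" using all_proj[OF EP H] BO by simp
  moreover have "Id C Q \<in> hom C Q (Cod C g)" using gA BO by (simp add: hom_def)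
  ultimately obtain t where t: "t \<in> hom C Q (Dom C g)" "Comp C g t = Id C Q"
    using EG unfolding projective_obj_def by blast
  have tA: "t \<in> Ar C" "Dom C t = Q" "Cod C t = B" using t gA by (auto simp: hom_def)
  let ?tg = "Comp C t g"
  have tgA: "?tg \<in> Ar C" "Dom C ?tg = B" "Cod C ?tg = B" using tA gA by auto
  obtain n where n: "n \<in> Ar C" "Dom C n = B" "Cod C n = B" "add ?tg n = zr B B"
    using neg_ex[OF tgA(1)] tgA by auto
  let ?phi = "add (Id C B) n"
  have phA: "?phi \<in> Ar C" "Dom C ?phi = B" "Cod C ?phi = B" using n BO by auto
  have gtg: "Comp C g ?tg = g"
  proof -
    have "Comp C g ?tg = Comp C (Comp C g t) g" using assoc[of g t g] gA tA by simp
    also have "\<dots> = g" using t(2) gA by simp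
    finally show ?thesis .
  qed
  have "zr B Q = Comp C g (add ?tg n)" using n gA BO by simp
  also have "\<dots> = add (Comp C g ?tg) (Comp C g n)" using distL[of ?tg n g] n gA tgA by simp
  finally have z1: "add g (Comp C g n) = zr B Q" using gtg by simp
  have "Comp C g ?phi = add (Comp C g (Id C B)) (Comp C g n)" using distL[of "Id C B" n g] n gA BO by simp
  also have "\<dots> = zr B Q" using z1 gA by simp
  finally have gph: "Comp C g ?phi = zr (Dom C ?phi) (Cod C g)" using gA phA by simp
  obtain s where s: "s \<in> hom C (Dom C ?phi) (Dom C f)" "Comp C f s = ?phi"
    using ku[OF phA(1) _ gph] phA gA by auto
  have sA: "s \<in> Ar C" "Dom C s = B" "Cod C s = K" using s phA fA by (auto simp: hom_def)
  have tgf: "Comp C ?tg f = zr K B"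
  proof -
    have "Comp C ?tg f = Comp C t (Comp C g f)" using assoc[of f g t] fA gA tA by simp
    also have "\<dots> = zr K B" using gf tA BO by simp
    finally show ?thesis .
  qed
  have "zr K B = Comp C (add ?tg n) f" using n fA BO by simp
  also have "\<dots> = add (Comp C ?tg f) (Comp C n f)" using distR[of f ?tg n] n fA tgA by simp
  also have "\<dots> = Comp C n f" using tgf n fA by simp
  finally have nf: "Comp C n f = zr K B" by simp
  have "Comp C ?phi f = add (Comp C (Id C B) f) (Comp C n f)" using distR[of f "Id C B" n] n fA BO by simp
  also have "\<dots> = f" using nf fA by simp
  finally have phf: "Comp C ?phi f = f" .
  have "Comp C f (Comp C s f) = Comp C f (Id C K)"
  proof -
    have "Comp C f (Comp C s f) = Comp C (Comp C f s) f" using assoc[of f s f] fA sA by simp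
    also have "\<dots> = Comp C f (Id C K)" using s(2) phf fA by simp
    finally show ?thesis .
  qed
  then have "Comp C s f = Id C K"
    by (rule mono_cancel[OF M, rotated -1]) (use fA sA BO in simp_all)
  then show "section_mor C f" unfolding section_mor_def using fA sA by (auto simp: hom_def)
qed

end

theorem theorem6p1:
  fixes C :: "('o,'m) cat"
  assumes "abelian C"
  shows
   "(spectral C \<longleftrightarrow>
       enough_injectives C \<and>
       (\<forall>M\<in>Ob C. \<forall>N\<in>Ob C. \<forall>i. fully_invariant C N i \<longrightarrow> MF_split C M N i)) \<and>
    (spectral C \<longleftrightarrow>
       enough_injectives C \<and>
       (\<forall>N\<in>Ob C. \<forall>i. fully_invariant C N i \<longrightarrow> MF_split C N N i)) \<and>
    (spectral C \<longleftrightarrow>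
       enough_injectives C \<and>
       (\<forall>M\<in>Ob C. \<forall>N\<in>Ob C. injective_obj C N \<longrightarrow>
          (\<forall>i. fully_invariant C N i \<longrightarrow> MF_split C M N i))) \<and>
    (spectral C \<longleftrightarrow>
       enough_injectives C \<and>
       (\<forall>N\<in>Ob C. injective_obj C N \<longrightarrow>
          (\<forall>i. fully_invariant C N i \<longrightarrow> MF_split C N N i))) \<and>
    (spectral C \<longleftrightarrow>
       enough_projectives C \<and>
       (\<forall>M\<in>Ob C. \<forall>N\<in>Ob C. \<forall>i. fully_invariant C N i \<longrightarrow> dual_MF_split C M N i)) \<and>
    (spectral C \<longleftrightarrow>
       enough_projectives C \<and>
       (\<forall>N\<in>Ob C. \<forall>i. fully_invariant C N i \<longrightarrow> dual_MF_split C N N i)) \<and>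
    (spectral C \<longleftrightarrow>
       enough_projectives C \<and>
       (\<forall>M\<in>Ob C. \<forall>N\<in>Ob C. projective_obj C M \<longrightarrow>
          (\<forall>i. fully_invariant C N i \<longrightarrow> dual_MF_split C M N i))) \<and>
    (spectral C \<longleftrightarrow>
       enough_projectives C \<and>
       (\<forall>N\<in>Ob C. projective_obj C N \<longrightarrow>
          (\<forall>i. fully_invariant C N i \<longrightarrow> dual_MF_split C N N i)))"
proof -
  obtain add zr where pre: "preadditive C add zr" using assms unfolding abelian_def by blast
  interpret A: abcat C add zr using pre assms by unfold_locales
  note sa = A.spec_all
  note si = A.spec_from_inj
  note sp = A.spec_from_proj
  show ?thesis
  proof (intro conjI iffI)
    show "spectral C" if "enough_injectives C \<and> (\<forall>M\<in>Ob C. \<forall>N\<in>Ob C. \<forall>i. fully_invariant C N i \<longrightarrow> MF_split C M N i)"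
      using that by (intro si) blast+
    show "spectral C" if "enough_injectives C \<and> (\<forall>N\<in>Ob C. \<forall>i. fully_invariant C N i \<longrightarrow> MF_split C N N i)"
      using that by (intro si) blast+
    show "spectral C" if "enough_injectives C \<and> (\<forall>M\<in>Ob C. \<forall>N\<in>Ob C. injective_obj C N \<longrightarrow>
          (\<forall>i. fully_invariant C N i \<longrightarrow> MF_split C M N i))"
      using that by (intro si) blast+
    show "spectral C" if "enough_injectives C \<and> (\<forall>N\<in>Ob C. injective_obj C N \<longrightarrow>
          (\<forall>i. fully_invariant C N i \<longrightarrow> MF_split C N N i))"
      using that by (intro si) blast+
    show "spectral C" if "enough_projectives C \<and> (\<forall>M\<in>Ob C. \<forall>N\<in>Ob C. \<forall>i. fully_invariant C N i \<longrightarrow> dual_MF_split C M N i)"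
      using that by (intro sp) blast+
    show "spectral C" if "enough_projectives C \<and> (\<forall>N\<in>Ob C. \<forall>i. fully_invariant C N i \<longrightarrow> dual_MF_split C N N i)"
      using that by (intro sp) blast+
    show "spectral C" if "enough_projectives C \<and> (\<forall>M\<in>Ob C. \<forall>N\<in>Ob C. projective_obj C M \<longrightarrow>
          (\<forall>i. fully_invariant C N i \<longrightarrow> dual_MF_split C M N i))"
      using that by (intro sp) blast+
    show "spectral C" if "enough_projectives C \<and> (\<forall>N\<in>Ob C. projective_obj C N \<longrightarrow>
          (\<forall>i. fully_invariant C N i \<longrightarrow> dual_MF_split C N N i))"
      using that by (intro sp) blast+
  qed (use sa in blast)+
qed

end
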